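(* Let $(X,d)$ be a metric space, $\alpha:X\times X\rightarrow[0,+\infty)$ and $T:X\rightarrow X$. Assume that $T$ is $\alpha$--admissible and $\alpha$--contractive of Meir--Keeler type. Let $x,y\in X$ with $\alpha(x,y)\geq1$. Then $\alpha(T^{n}x,T^{n}y)\geq1$ for all $n\in\mathbb{N}$, the sequence $\{d(T^{n}x,T^{n}y)\}_{n}$ is nonincreasing, and $d(T^{n}x,T^{n}y)\rightarrow0$ as $n\rightarrow\infty$.
   Context: $\mathbb{N}$ denotes the set of non-negative integers and $T^n$ is the $n$-th iterate of $T$ ($T^0$ the identity). $T$ is called an $\alpha$--contractive mapping of Meir--Keeler type if for every $\varepsilon>0$ there exists $\delta(\varepsilon)>0$ such that for all $x,y\in X$: $\varepsilon\leq d(x,y)<\varepsilon+\delta(\varepsilon)$ implies $\alpha(x,y)\,d(Tx,Ty)<\varepsilon$. $T$ is called $\alpha$--admissible if for all $x,y\in X$, $\alpha(x,y)\geq1$ implies $\alpha(Tx,Ty)\geq1$. *)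

theory Defs
  imports "HOL-Analysis.Analysis"
begin

definition alpha_admissible :: "('a \<Rightarrow> 'a \<Rightarrow> real) \<Rightarrow> ('a \<Rightarrow> 'a) \<Rightarrow> bool" where
  "alpha_admissible \<alpha> T \<longleftrightarrow> (\<forall>x y. \<alpha> x y \<ge> 1 \<longrightarrow> \<alpha> (T x) (T y) \<ge> 1)"

definition alpha_meir_keeler :: "('a::metric_space \<Rightarrow> 'a \<Rightarrow> real) \<Rightarrow> ('a \<Rightarrow> 'a) \<Rightarrow> bool" where
  "alpha_meir_keeler \<alpha> T \<longleftrightarrow>
     (\<forall>\<epsilon>>0. \<exists>\<delta>>0. \<forall>x y. \<epsilon> \<le> dist x y \<and> dist x y < \<epsilon> + \<delta> \<longrightarrow>
        \<alpha> x y * dist (T x) (T y) < \<epsilon>)"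

end

theory Submission
  imports Defs
begin

theorem lemma2:
  fixes \<alpha> :: "'a::metric_space \<Rightarrow> 'a \<Rightarrow> real" and T :: "'a \<Rightarrow> 'a" and x y :: 'a
  assumes "\<And>u v. \<alpha> u v \<ge> 0"
    and "alpha_admissible \<alpha> T"
    and "alpha_meir_keeler \<alpha> T"
    and "\<alpha> x y \<ge> 1"
  shows "(\<forall>n. \<alpha> ((T ^^ n) x) ((T ^^ n) y) \<ge> 1)
    \<and> decseq (\<lambda>n. dist ((T ^^ n) x) ((T ^^ n) y))
    \<and> (\<lambda>n. dist ((T ^^ n) x) ((T ^^ n) y)) \<longlonglongrightarrow> 0"
proof -
  define d where "d n = dist ((T ^^ n) x) ((T ^^ n) y)" for n
  have A: "\<alpha> ((T ^^ n) x) ((T ^^ n) y) \<ge> 1" for n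
    by (induction n) (use assms(2,4) in \<open>auto simp: alpha_admissible_def\<close>)
  have MK: "dist (T u) (T v) < e" if "\<alpha> u v \<ge> 1" "e > 0" "e \<le> dist u v" "dist u v < e + \<delta>"
    "\<forall>x y. e \<le> dist x y \<and> dist x y < e + \<delta> \<longrightarrow> \<alpha> x y * dist (T x) (T y) < e" for u v e \<delta>
  proof -
    have "\<alpha> u v * dist (T u) (T v) < e" using that by blast
    moreover have "dist (T u) (T v) \<le> \<alpha> u v * dist (T u) (T v)"
      using that(1) by (simp add: mult_le_cancel_right1)
    ultimately show ?thesis by linarith
  qed
  have step: "dist (T u) (T v) \<le> dist u v" if "\<alpha> u v \<ge> 1" for u v
  proof (cases "dist u v = 0")
    case True then show ?thesis by simp
  next
    case False
    then have p: "dist u v > 0" by simp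
    from assms(3) p obtain \<delta> where "\<delta> > 0" and
      H: "\<forall>x y. dist u v \<le> dist x y \<and> dist x y < dist u v + \<delta> \<longrightarrow> \<alpha> x y * dist (T x) (T y) < dist u v"
      unfolding alpha_meir_keeler_def by blast
    have "dist (T u) (T v) < dist u v"
      by (rule MK[OF that p _ _ H]) (use \<open>\<delta> > 0\<close> in auto)
    then show ?thesis by simp
  qed
  have dec: "decseq d"
    unfolding decseq_Suc_iff d_def using step[OF A] by simp
  obtain L where L: "d \<longlonglongrightarrow> L" "\<forall>i. L \<le> d i"
    using decseq_convergent[OF dec, of 0] by (auto simp: d_def)
  have "L \<ge> 0" by (rule LIMSEQ_le_const[OF L(1)]) (auto simp: d_def)
  have "L = 0"
  proof (rule ccontr)
    assume "L \<noteq> 0"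
    with \<open>L \<ge> 0\<close> have Lp: "L > 0" by simp
    from assms(3) Lp obtain \<delta> where "\<delta> > 0" and
      H: "\<forall>x y. L \<le> dist x y \<and> dist x y < L + \<delta> \<longrightarrow> \<alpha> x y * dist (T x) (T y) < L"
      unfolding alpha_meir_keeler_def by blast
    from L(1) \<open>\<delta> > 0\<close> obtain N where "\<forall>n\<ge>N. dist (d n) L < \<delta>"
      unfolding lim_sequentially by blast
    then have "d N < L + \<delta>" by (auto simp: dist_real_def)
    then have "dist (T ((T ^^ N) x)) (T ((T ^^ N) y)) < L"
      using L(2) by (intro MK[OF A Lp _ _ H]) (auto simp: d_def)
    then have "d (Suc N) < L" by (simp add: d_def)
    with L(2) show False by (meson not_le)
  qed
  with A dec L(1) show ?thesis unfolding d_def by auto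
qed

end
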